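(* Let $X$ be a metric space and $1\le p\le q<\infty$. Then for every $S>0$, $\epsilon_{X;p}(S)\le \frac{q}{p}\,\epsilon_{X;q}(S)$.
   Context: For a metric space $(X,d)$ and $1\le p<\infty$, $\ell^p(X)$ is the space of $p$-summable real functions on $X$ and $\ell^p_1(X)$ its unit sphere. For a map $\xi\colon X\to\ell^p(X)$, written $x\mapsto\xi_x$, put $S(\xi)=\sup\{d(x,y):\xi_x(y)\neq0\}$ and $\varepsilon(\xi;p)=\sup_{x\ne y}\|\xi_x-\xi_y\|_p/d(x,y)$. The profile is $\epsilon_{X;p}(S)=\inf\{\varepsilon(\xi;p):\xi\colon X\to\ell^p_1(X),\ S(\xi)\le S\}$. *)

theory Defs
  imports "HOL-Analysis.Analysis"
begin

definition lp_space :: "real \<Rightarrow> ('a \<Rightarrow> real) set" where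
  "lp_space p = {f. (\<lambda>y. \<bar>f y\<bar> powr p) summable_on UNIV}"

definition lp_norm :: "real \<Rightarrow> ('a \<Rightarrow> real) \<Rightarrow> real" where
  "lp_norm p f = (\<Sum>\<^sub>\<infinity>y. \<bar>f y\<bar> powr p) powr (1 / p)"

definition lp_sphere :: "real \<Rightarrow> ('a \<Rightarrow> real) set" where
  "lp_sphere p = {f \<in> lp_space p. lp_norm p f = 1}"

definition prop_size :: "('a::metric_space \<Rightarrow> 'a \<Rightarrow> real) \<Rightarrow> ereal" where
  "prop_size \<xi> = (SUP xy \<in> {(x, y). \<xi> x y \<noteq> 0}. ereal (dist (fst xy) (snd xy)))"

definition var_eps :: "('a::metric_space \<Rightarrow> 'a \<Rightarrow> real) \<Rightarrow> real \<Rightarrow> ereal" where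
  "var_eps \<xi> p = (SUP xy \<in> {(x, y). x \<noteq> y}.
      ereal (lp_norm p (\<lambda>z. \<xi> (fst xy) z - \<xi> (snd xy) z) / dist (fst xy) (snd xy)))"

text \<open>The profile epsilon_{X;p}(S) (extended reals; infimum over the empty set is +\<infinity>).\<close>
definition profile :: "real \<Rightarrow> real \<Rightarrow> 'a::metric_space itself \<Rightarrow> ereal" where
  "profile p S (_ :: 'a itself) =
     (INF \<xi> \<in> {\<xi> :: 'a \<Rightarrow> 'a \<Rightarrow> real. (\<forall>x. \<xi> x \<in> lp_sphere p) \<and> prop_size \<xi> \<le> ereal S}. var_eps \<xi> p)"

end

theory Submission
  imports Defs
begin

definition mz :: "real \<Rightarrow> real \<Rightarrow> real" where
  "mz r a = sgn a * \<bar>a\<bar> powr r"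

lemma abs_mz: "\<bar>mz r a\<bar> = \<bar>a\<bar> powr r"
  by (simp add: mz_def abs_mult abs_sgn_eq)

lemma mz_neg: "mz r (- a) = - mz r a"
  by (simp add: mz_def)

lemma mz_nonneg: "a \<ge> 0 \<Longrightarrow> mz r a = a powr r"
  by (cases "a = 0") (auto simp: mz_def)

lemma mz_eq0: "mz r a = 0 \<longleftrightarrow> a = 0"
  by (auto simp: mz_def sgn_0_0)

lemma power_mean2:
  fixes s q x y :: real
  assumes "s > 0" "q \<ge> s" "x > 0" "y > 0"
  shows "(x powr s + y powr s) / 2 \<le> ((x powr q + y powr q) / 2) powr (s / q)"
proof -
  define t where "t = q / s"
  have t1: "t \<ge> 1" using assms by (simp add: t_def)
  have cv: "convex_on {0<..} (\<lambda>u. u powr t)" using powr_convex[OF t1] .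
  have X: "x powr s > 0" "y powr s > 0" using assms by auto
  have "((1 - 1/2) *\<^sub>R (x powr s) + (1/2) *\<^sub>R (y powr s)) powr t
        \<le> (1 - 1/2) * (x powr s) powr t + (1/2) * (y powr s) powr t"
    using convex_onD[OF cv, of "1/2" "x powr s" "y powr s"] X by simp
  also have "(x powr s) powr t = x powr q" using assms by (simp add: powr_powr t_def)
  also have "(y powr s) powr t = y powr q" using assms by (simp add: powr_powr t_def)
  finally have A: "((x powr s + y powr s) / 2) powr t \<le> (x powr q + y powr q) / 2"
    by (simp add: field_simps)
  have "(x powr s + y powr s) / 2 = (((x powr s + y powr s) / 2) powr t) powr (1/t)"
    using X t1 by (simp add: powr_powr)
  also have "\<dots> \<le> ((x powr q + y powr q) / 2) powr (1/t)"
    using A t1 by (intro powr_mono2) auto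
  also have "1/t = s/q" using assms by (simp add: t_def)
  finally show ?thesis .
qed

lemma g_mono:
  fixes m h H q :: real
  assumes "0 \<le> h" "h \<le> H" "H \<le> m" "q \<ge> 1"
  shows "(m+h) powr q + (m-h) powr q \<le> (m+H) powr q + (m-H) powr q"
proof -
  let ?g = "\<lambda>u. (m+u) powr q + (m-u) powr q"
  have "?g h \<le> ?g H"
  proof (rule DERIV_nonneg_imp_increasing_open[OF assms(2)])
    fix u assume u: "h < u" "u < H"
    hence pos: "m + u > 0" "m - u > 0" using assms by auto
    have "DERIV ?g u :> q * (m+u) powr (q-1) - q * (m-u) powr (q-1)"
      using pos by (auto intro!: derivative_eq_intros)
    moreover have "(m-u) powr (q-1) \<le> (m+u) powr (q-1)"
      using pos u assms by (intro powr_mono2) auto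
    hence "q * (m+u) powr (q-1) - q * (m-u) powr (q-1) \<ge> 0"
      using assms by (simp add: mult_left_mono)
    ultimately show "\<exists>y. DERIV ?g u :> y \<and> y \<ge> 0" by blast
  next
    show "continuous_on {h..H} ?g"
      using assms by (intro continuous_intros continuous_on_powr') auto
  qed
  thus ?thesis .
qed

lemma S_ineq:
  fixes a b r q :: real
  assumes "0 \<le> b" "b \<le> a" "r > 1" "q \<ge> 1" "r - 1 \<le> q"
  shows "a powr r - b powr r \<le> r * (a - b) * ((a powr q + b powr q) / 2) powr ((r - 1) / q)"
proof (cases "a = b")
  case True thus ?thesis by simp
next
  case False
  hence ab: "b < a" using assms by simp
  define m where "m = (a + b) / 2"
  define H where "H = (a - b) / 2"
  define MH where "MH = ((a powr q + b powr q) / 2) powr ((r - 1) / q)"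
  have mH: "0 < H" "H \<le> m" "m + H = a" "m - H = b" "m > 0"
    using ab assms by (auto simp: m_def H_def field_simps)
  let ?K = "\<lambda>h. 2 * r * h * MH - ((m+h) powr r - (m-h) powr r)"
  have "?K 0 \<le> ?K H"
  proof (rule DERIV_nonneg_imp_increasing_open[of 0 H ?K])
    show "0 \<le> H" using mH by simp
  next
    fix h assume h: "0 < h" "h < H"
    hence pos: "m + h > 0" "m - h > 0" using mH by auto
    have "DERIV ?K h :> 2 * r * MH - (r * (m+h) powr (r-1) + r * (m-h) powr (r-1))"
      using pos by (auto intro!: derivative_eq_intros simp: algebra_simps)
    moreover have "(m+h) powr (r-1) + (m-h) powr (r-1) \<le> 2 * MH"
    proof -
      have "((m+h) powr (r-1) + (m-h) powr (r-1)) / 2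
          \<le> (((m+h) powr q + (m-h) powr q) / 2) powr ((r-1)/q)"
        using power_mean2[of "r-1" q "m+h" "m-h"] pos assms by simp
      also have "\<dots> \<le> MH" unfolding MH_def
        using g_mono[of h H m q] h mH assms
        by (intro powr_mono2) (auto simp: add_nonneg_nonneg)
      finally show ?thesis by simp
    qed
    then have "2 * r * MH - (r * (m+h) powr (r-1) + r * (m-h) powr (r-1)) \<ge> 0"
    proof -
      assume L: "(m+h) powr (r-1) + (m-h) powr (r-1) \<le> 2 * MH"
      have "r * ((m+h) powr (r-1) + (m-h) powr (r-1)) \<le> r * (2 * MH)"
        using L assms by (intro mult_left_mono) auto
      thus ?thesis by (simp add: algebra_simps)
    qed
    ultimately show "\<exists>y. DERIV ?K h :> y \<and> y \<ge> 0" by blast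
  next
    show "continuous_on {0..H} ?K"
      using mH assms by (intro continuous_intros continuous_on_powr') auto
  qed
  moreover have "?K 0 = 0" using mH by simp
  ultimately have "a powr r - b powr r \<le> 2 * r * H * MH" using mH by simp
  thus ?thesis by (simp add: MH_def H_def)
qed

definition Mq :: "real \<Rightarrow> real \<Rightarrow> real \<Rightarrow> real \<Rightarrow> real" where
  "Mq r q a b = ((\<bar>a\<bar> powr q + \<bar>b\<bar> powr q) / 2) powr ((r - 1) / q)"

lemma Mq_mono:
  assumes "r > 1" "q \<ge> 1" "\<bar>a\<bar> \<le> \<bar>a'\<bar>" "\<bar>b\<bar> \<le> \<bar>b'\<bar>"
  shows "Mq r q a b \<le> Mq r q a' b'"
  unfolding Mq_def using assms
  by (intro powr_mono2 divide_right_mono add_mono) auto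

lemma P_ineq_aux:
  fixes a b r q :: real
  assumes "b \<le> a" "r > 1" "q \<ge> 1" "r - 1 \<le> q"
  shows "\<bar>mz r a - mz r b\<bar> \<le> r * \<bar>a - b\<bar> * Mq r q a b"
proof -
  consider "0 \<le> b" | "a \<le> 0" | "b < 0" "0 < a" by linarith
  thus ?thesis
  proof cases
    case 1
    hence "a powr r - b powr r \<le> r * (a - b) * ((a powr q + b powr q) / 2) powr ((r - 1) / q)"
      using S_ineq assms by blast
    moreover have "b powr r \<le> a powr r" using 1 assms by (intro powr_mono2) auto
    ultimately show ?thesis using 1 assms by (simp add: mz_nonneg Mq_def)
  next
    case 2
    have "(-b) powr r - (-a) powr r \<le> r * (-b - -a) * (((-b) powr q + (-a) powr q) / 2) powr ((r - 1) / q)"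
      using S_ineq[of "-a" "-b" r q] assms 2 by simp
    moreover have "(-a) powr r \<le> (-b) powr r" using 2 assms by (intro powr_mono2) auto
    moreover have "mz r a = - ((-a) powr r)" "mz r b = - ((-b) powr r)"
      using mz_neg[of r "-a"] mz_neg[of r "-b"] mz_nonneg[of "-a" r] mz_nonneg[of "-b" r] 2 assms by auto
    ultimately show ?thesis using 2 assms by (simp add: Mq_def add.commute)
  next
    case 3
    have A: "a powr r - 0 powr r \<le> r * (a - 0) * ((a powr q + 0 powr q) / 2) powr ((r - 1) / q)"
      using S_ineq[of 0 a r q] assms 3 by simp
    have B: "(-b) powr r - 0 powr r \<le> r * (-b - 0) * (((-b) powr q + 0 powr q) / 2) powr ((r - 1) / q)"
      using S_ineq[of 0 "-b" r q] assms 3 by simp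
    have A': "a powr r \<le> r * a * Mq r q a b"
    proof -
      have "Mq r q a 0 \<le> Mq r q a b" using assms by (intro Mq_mono) auto
      hence X: "r * a * Mq r q a 0 \<le> r * a * Mq r q a b" using assms 3 by (intro mult_left_mono) auto
      have "a powr r \<le> r * a * Mq r q a 0" using A 3 assms by (simp add: Mq_def)
      also note X
      finally show ?thesis .
    qed
    have B': "(-b) powr r \<le> r * (-b) * Mq r q a b"
    proof -
      have "Mq r q 0 b \<le> Mq r q a b" using assms by (intro Mq_mono) auto
      hence X: "r * (-b) * Mq r q 0 b \<le> r * (-b) * Mq r q a b" using assms 3 by (intro mult_left_mono) (auto simp: mult_nonneg_nonpos)
      have "(-b) powr r \<le> r * (-b) * Mq r q 0 b" using B 3 assms by (simp add: Mq_def)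
      also note X
      finally show ?thesis .
    qed
    have "mz r a = a powr r" "mz r b = - ((-b) powr r)"
      using mz_neg[of r "-b"] mz_nonneg[of a r] mz_nonneg[of "-b" r] 3 by auto
    moreover have "\<bar>a - b\<bar> = a + (-b)" using 3 by simp
    ultimately show ?thesis using A' B' 3
      by (simp add: algebra_simps)
  qed
qed

lemma P_ineq:
  fixes a b r q :: real
  assumes "r > 1" "q \<ge> 1" "r - 1 \<le> q"
  shows "\<bar>mz r a - mz r b\<bar> \<le> r * \<bar>a - b\<bar> * Mq r q a b"
proof (cases "b \<le> a")
  case True thus ?thesis using P_ineq_aux assms by blast
next
  case False
  hence "\<bar>mz r b - mz r a\<bar> \<le> r * \<bar>b - a\<bar> * Mq r q b a" using P_ineq_aux assms by simp
  thus ?thesis by (simp add: Mq_def abs_minus_commute add.commute)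
qed

lemma Q_ineq:
  fixes a b p q D :: real
  assumes p1: "1 \<le> p" and pq: "p < q" and D: "D > 0"
  shows "\<bar>mz (q/p) a - mz (q/p) b\<bar> powr p \<le>
     ((q/p) powr p * D powr p * (p/q) / D powr q) * \<bar>a - b\<bar> powr q
     + ((q/p) powr p * D powr p * ((q-p)/q) / 2) * (\<bar>a\<bar> powr q + \<bar>b\<bar> powr q)"
proof (cases "a = b")
  case True
  have "0 \<le> ((q/p) powr p * D powr p * ((q-p)/q) / 2) * (\<bar>a\<bar> powr q + \<bar>b\<bar> powr q)"
    using assms by (intro mult_nonneg_nonneg divide_nonneg_nonneg add_nonneg_nonneg) auto
  thus ?thesis using True assms by simp
next
  case False
  define r where "r = q / p"
  define S where "S = (\<bar>a\<bar> powr q + \<bar>b\<bar> powr q) / 2"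
  define d where "d = \<bar>a - b\<bar>"
  define \<alpha> where "\<alpha> = p / q"
  define \<beta> where "\<beta> = (q - p) / q"
  have q1: "q > 1" using assms by simp
  have r1: "r > 1" using assms by (simp add: r_def)
  have rq: "r - 1 \<le> q"
  proof -
    have "q / p \<le> q" using assms by (simp add: divide_le_eq)
    thus ?thesis by (simp add: r_def)
  qed
  have dpos: "d > 0" using False by (simp add: d_def)
  have Spos: "S > 0"
  proof (cases "a = 0")
    case True
    hence "b \<noteq> 0" using False by simp
    thus ?thesis by (simp add: S_def add_nonneg_pos)
  next
    case False
    thus ?thesis by (simp add: S_def add_pos_nonneg)
  qed
  have Mq_eq: "Mq r q a b = S powr ((r - 1) / q)" by (simp add: Mq_def S_def)
  have P: "\<bar>mz r a - mz r b\<bar> \<le> r * d * S powr ((r - 1) / q)"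
    using P_ineq[OF r1 _ rq, of a b] q1 Mq_eq by (simp add: d_def)
  have "\<bar>mz r a - mz r b\<bar> powr p \<le> (r * d * S powr ((r - 1) / q)) powr p"
    using P p1 by (intro powr_mono2) auto
  also have "\<dots> = r powr p * d powr p * S powr \<beta>"
  proof -
    have "(S powr ((r - 1) / q)) powr p = S powr \<beta>"
    proof -
      have e: "(q / p - 1) / q * p = (q - p) / q" using assms by (simp add: field_simps)
      have "(S powr ((r - 1) / q)) powr p = S powr ((q / p - 1) / q * p)"
        by (simp add: powr_powr r_def)
      thus ?thesis by (simp only: e \<beta>_def)
    qed
    thus ?thesis using r1 dpos Spos by (simp add: powr_mult)
  qed
  also have "d powr p * S powr \<beta> \<le> D powr p * (\<alpha> * (d powr q / D powr q) + \<beta> * S)"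
  proof -
    have Y: "(d powr q / D powr q) powr \<alpha> * S powr \<beta> \<le> \<alpha> * (d powr q / D powr q) + \<beta> * S"
      using assms dpos Spos by (intro Youngs_inequality_0) (auto simp: \<alpha>_def \<beta>_def field_simps)
    have "(d powr q / D powr q) powr \<alpha> = d powr p / D powr p"
      using assms dpos by (simp add: powr_divide powr_powr \<alpha>_def)
    hence "d powr p / D powr p * S powr \<beta> \<le> \<alpha> * (d powr q / D powr q) + \<beta> * S" using Y by simp
    hence "D powr p * (d powr p / D powr p * S powr \<beta>) \<le> D powr p * (\<alpha> * (d powr q / D powr q) + \<beta> * S)"
      using D by (intro mult_left_mono) auto
    thus ?thesis using D by simp
  qed
  hence "r powr p * d powr p * S powr \<beta> \<le> r powr p * (D powr p * (\<alpha> * (d powr q / D powr q) + \<beta> * S))"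
    using r1 by (simp add: mult.assoc mult_left_mono)
  also have "\<dots> = ((q/p) powr p * D powr p * (p/q) / D powr q) * \<bar>a - b\<bar> powr q
     + ((q/p) powr p * D powr p * ((q-p)/q) / 2) * (\<bar>a\<bar> powr q + \<bar>b\<bar> powr q)"
    using q1 by (simp add: r_def d_def S_def \<alpha>_def \<beta>_def field_simps)
  finally show ?thesis by (simp add: r_def)
qed

lemma sphere_sum1:
  assumes "f \<in> lp_sphere q" "q > 0"
  shows "(\<lambda>y. \<bar>f y\<bar> powr q) summable_on UNIV" "(\<Sum>\<^sub>\<infinity>y. \<bar>f y\<bar> powr q) = 1"
proof -
  show "(\<lambda>y. \<bar>f y\<bar> powr q) summable_on UNIV" using assms by (simp add: lp_sphere_def lp_space_def)
  define X where "X = (\<Sum>\<^sub>\<infinity>y. \<bar>f y\<bar> powr q)"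
  have X0: "X \<ge> 0" unfolding X_def by (intro infsum_nonneg) auto
  have N: "X powr (1/q) = 1" using assms by (simp add: lp_sphere_def lp_norm_def X_def)
  have "X = (X powr (1/q)) powr q" using X0 assms by (simp add: powr_powr)
  thus "(\<Sum>\<^sub>\<infinity>y. \<bar>f y\<bar> powr q) = 1" using N by (simp add: X_def)
qed

lemma diff_pow_bound:
  fixes x y q :: real
  assumes "q > 0"
  shows "\<bar>x - y\<bar> powr q \<le> 2 powr q * (\<bar>x\<bar> powr q + \<bar>y\<bar> powr q)"
proof -
  have "\<bar>x - y\<bar> \<le> 2 * max \<bar>x\<bar> \<bar>y\<bar>" by linarith
  hence "\<bar>x - y\<bar> powr q \<le> (2 * max \<bar>x\<bar> \<bar>y\<bar>) powr q" using assms by (intro powr_mono2) auto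
  also have "\<dots> = 2 powr q * max \<bar>x\<bar> \<bar>y\<bar> powr q" by (simp add: powr_mult)
  also have "max \<bar>x\<bar> \<bar>y\<bar> powr q \<le> \<bar>x\<bar> powr q + \<bar>y\<bar> powr q"
    by (cases "\<bar>x\<bar> \<le> \<bar>y\<bar>") (auto simp: max_def)
  hence "2 powr q * max \<bar>x\<bar> \<bar>y\<bar> powr q \<le> 2 powr q * (\<bar>x\<bar> powr q + \<bar>y\<bar> powr q)"
    by (intro mult_left_mono) auto
  finally show ?thesis .
qed

lemma diff_summable:
  assumes "f \<in> lp_sphere q" "g \<in> lp_sphere q" "q > 0"
  shows "(\<lambda>y. \<bar>f y - g y\<bar> powr q) summable_on UNIV"
proof (rule summable_on_comparison_test)
  have "(\<lambda>y. \<bar>f y\<bar> powr q + \<bar>g y\<bar> powr q) summable_on UNIV"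
    using sphere_sum1(1)[OF assms(1,3)] sphere_sum1(1)[OF assms(2,3)] by (rule summable_on_add)
  thus "(\<lambda>y. 2 powr q * (\<bar>f y\<bar> powr q + \<bar>g y\<bar> powr q)) summable_on UNIV"
    by (rule summable_on_cmult_right)
  show "\<And>y. y \<in> UNIV \<Longrightarrow> \<bar>f y - g y\<bar> powr q \<le> 2 powr q * (\<bar>f y\<bar> powr q + \<bar>g y\<bar> powr q)"
    using diff_pow_bound assms by blast
  show "\<And>y. y \<in> UNIV \<Longrightarrow> 0 \<le> \<bar>f y - g y\<bar> powr q" by simp
qed

lemma mz_pow: "p > 0 \<Longrightarrow> \<bar>mz (q/p) a\<bar> powr p = \<bar>a\<bar> powr q"
  by (simp add: abs_mz powr_powr)

lemma mz_sphere:
  assumes "f \<in> lp_sphere q" "p > 0" "q > 0"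
  shows "(\<lambda>y. mz (q/p) (f y)) \<in> lp_sphere p"
proof -
  have e: "(\<lambda>y. \<bar>mz (q/p) (f y)\<bar> powr p) = (\<lambda>y. \<bar>f y\<bar> powr q)"
    using assms by (simp add: mz_pow)
  show ?thesis using sphere_sum1[OF assms(1,3)]
    by (simp add: lp_sphere_def lp_space_def lp_norm_def e)
qed

lemma pair_ineq:
  assumes f: "f \<in> lp_sphere q" and g: "g \<in> lp_sphere q" and p1: "1 \<le> p" and pq: "p < q"
  shows "lp_norm p (\<lambda>z. mz (q/p) (f z) - mz (q/p) (g z)) \<le> (q/p) * lp_norm q (\<lambda>z. f z - g z)"
proof -
  have q0: "q > 0" and p0: "p > 0" using assms by auto
  define F where "F = (\<lambda>z. \<bar>f z - g z\<bar> powr q)"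
  define X where "X = infsum F UNIV"
  define D where "D = X powr (1/q)"
  define G where "G = (\<lambda>z. \<bar>mz (q/p) (f z) - mz (q/p) (g z)\<bar> powr p)"
  have Fs: "F summable_on UNIV" unfolding F_def using diff_summable[OF f g q0] .
  have X0: "X \<ge> 0" unfolding X_def F_def by (intro infsum_nonneg) auto
  have RHS: "lp_norm q (\<lambda>z. f z - g z) = D" by (simp add: lp_norm_def D_def X_def F_def)
  have LHS: "lp_norm p (\<lambda>z. mz (q/p) (f z) - mz (q/p) (g z)) = (infsum G UNIV) powr (1/p)"
    by (simp add: lp_norm_def G_def)
  show ?thesis
  proof (cases "X = 0")
    case True
    have "F z = 0" for z
      using nonneg_infsum_le_0D[of F UNIV z] Fs True by (simp add: X_def F_def)
    hence "f z = g z" for z by (simp add: F_def)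
    hence "G = (\<lambda>z. 0)" by (simp add: G_def)
    hence "lp_norm p (\<lambda>z. mz (q/p) (f z) - mz (q/p) (g z)) = 0" using LHS by simp
    moreover have "D \<ge> 0" by (simp add: D_def)
    ultimately show ?thesis using RHS p0 q0 by simp
  next
    case False
    hence Xp: "X > 0" using X0 by simp
    hence Dp: "D > 0" by (simp add: D_def)
    have DX: "D powr q = X" using Xp q0 by (simp add: D_def powr_powr)
    define c1 where "c1 = (q/p) powr p * D powr p * (p/q) / D powr q"
    define c2 where "c2 = (q/p) powr p * D powr p * ((q-p)/q) / 2"
    define A where "A = (\<lambda>z. \<bar>f z\<bar> powr q)"
    define B where "B = (\<lambda>z. \<bar>g z\<bar> powr q)"
    have As: "A summable_on UNIV" and Ai: "infsum A UNIV = 1"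
      using sphere_sum1[OF f q0] by (simp_all add: A_def)
    have Bs: "B summable_on UNIV" and Bi: "infsum B UNIV = 1"
      using sphere_sum1[OF g q0] by (simp_all add: B_def)
    define Bd where "Bd = (\<lambda>z. c1 * F z + c2 * (A z + B z))"
    have ABs: "(\<lambda>z. A z + B z) summable_on UNIV" using As Bs by (rule summable_on_add)
    have Bds: "Bd summable_on UNIV" unfolding Bd_def
      using summable_on_cmult_right[OF Fs] summable_on_cmult_right[OF ABs] by (rule summable_on_add)
    have GB: "G z \<le> Bd z" for z
      unfolding G_def Bd_def c1_def c2_def F_def A_def B_def using Q_ineq[OF p1 pq Dp] .
    have Gs: "G summable_on UNIV"
      using Bds GB by (rule summable_on_comparison_test) (simp add: G_def)
    have "infsum G UNIV \<le> infsum Bd UNIV" using Gs Bds GB by (rule infsum_mono)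
    also have "infsum Bd UNIV = c1 * X + c2 * 2"
    proof -
      have "infsum Bd UNIV = infsum (\<lambda>z. c1 * F z) UNIV + infsum (\<lambda>z. c2 * (A z + B z)) UNIV"
        unfolding Bd_def
        using summable_on_cmult_right[OF Fs] summable_on_cmult_right[OF ABs] by (rule infsum_add)
      also have "\<dots> = c1 * X + c2 * (infsum A UNIV + infsum B UNIV)"
        using Fs ABs As Bs by (simp add: infsum_cmult_right infsum_add X_def)
      finally show ?thesis using Ai Bi by simp
    qed
    also have "c1 * X + c2 * 2 = ((q/p) * D) powr p"
    proof -
      have m: "((q/p) * D) powr p = (q/p) powr p * D powr p"
        using p0 q0 Dp by (intro powr_mult; simp)
      have "c1 * X + c2 * 2 = (q/p) powr p * D powr p * (p/q + (q-p)/q)"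
        using DX Xp q0 by (simp add: c1_def c2_def field_simps)
      also have "p/q + (q-p)/q = 1" using q0 by (simp add: field_simps)
      finally show ?thesis using m by simp
    qed
    finally have Gle: "infsum G UNIV \<le> ((q/p) * D) powr p" .
    have "(infsum G UNIV) powr (1/p) \<le> (((q/p) * D) powr p) powr (1/p)"
      using Gle p0 by (intro powr_mono2) (auto intro: infsum_nonneg simp: G_def)
    also have "\<dots> = (q/p) * D" using p0 q0 Dp by (simp add: powr_powr)
    finally show ?thesis using LHS RHS by simp
  qed
qed

lemma var_eps_le:
  fixes \<xi> :: "'a::metric_space \<Rightarrow> 'a \<Rightarrow> real"
  assumes sph: "\<And>x. \<xi> x \<in> lp_sphere q" and p1: "1 \<le> p" and pq: "p < q"
  shows "var_eps (\<lambda>x z. mz (q/p) (\<xi> x z)) p \<le> ereal (q/p) * var_eps \<xi> q"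
  unfolding var_eps_def
proof (rule SUP_least)
  fix xy :: "'a \<times> 'a" assume xy: "xy \<in> {(x, y). x \<noteq> y}"
  obtain x y where e: "xy = (x, y)" and ne: "x \<noteq> y" using xy by auto
  have d: "dist x y > 0" using ne by simp
  let ?Np = "lp_norm p (\<lambda>z. mz (q/p) (\<xi> x z) - mz (q/p) (\<xi> y z))"
  let ?Nq = "lp_norm q (\<lambda>z. \<xi> x z - \<xi> y z)"
  have "?Np \<le> (q/p) * ?Nq" using pair_ineq[OF sph sph p1 pq] .
  hence "?Np / dist x y \<le> (q/p) * ?Nq / dist x y" using d by (intro divide_right_mono) auto
  hence "ereal (?Np / dist x y) \<le> ereal (q/p) * ereal (?Nq / dist x y)" by simp
  also have "\<dots> \<le> ereal (q/p) * (SUP xy \<in> {(x, y). x \<noteq> y}.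
      ereal (lp_norm q (\<lambda>z. \<xi> (fst xy) z - \<xi> (snd xy) z) / dist (fst xy) (snd xy)))"
    using p1 pq ne by (intro ereal_mult_left_mono SUP_upper2[of "(x,y)"]) auto
  finally show "ereal (lp_norm p (\<lambda>z. mz (q/p) (\<xi> (fst xy) z) - mz (q/p) (\<xi> (snd xy) z)) / dist (fst xy) (snd xy))
     \<le> ereal (q/p) * (SUP xy \<in> {(x, y). x \<noteq> y}.
      ereal (lp_norm q (\<lambda>z. \<xi> (fst xy) z - \<xi> (snd xy) z) / dist (fst xy) (snd xy)))"
    by (simp add: e)
qed

lemma prop_size_mz: "prop_size (\<lambda>x z. mz r (\<xi> x z)) = prop_size \<xi>"
  by (simp add: prop_size_def mz_eq0)

theorem corollary2p3p1:
  fixes p q S :: real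
  assumes "1 \<le> p" and "p \<le> q" and "S > 0"
  shows "profile p S TYPE('a::metric_space) \<le> ereal (q / p) * profile q S TYPE('a)"
proof (cases "p = q")
  case True
  thus ?thesis using assms by simp
next
  case False
  hence pq: "p < q" using assms by simp
  define c where "c = q / p"
  have c0: "c > 0" using assms by (simp add: c_def)
  define Ip where "Ip = profile p S TYPE('a)"
  have key: "Ip \<le> ereal c * var_eps \<xi> q"
    if "\<xi> \<in> {\<xi> :: 'a \<Rightarrow> 'a \<Rightarrow> real. (\<forall>x. \<xi> x \<in> lp_sphere q) \<and> prop_size \<xi> \<le> ereal S}" for \<xi>
  proof -
    have sph: "\<And>x. \<xi> x \<in> lp_sphere q" and ps: "prop_size \<xi> \<le> ereal S" using that by auto
    let ?\<eta> = "\<lambda>x z. mz (q/p) (\<xi> x z)"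
    have "?\<eta> \<in> {\<xi> :: 'a \<Rightarrow> 'a \<Rightarrow> real. (\<forall>x. \<xi> x \<in> lp_sphere p) \<and> prop_size \<xi> \<le> ereal S}"
      using mz_sphere[OF sph] assms pq ps by (simp add: prop_size_mz)
    hence "Ip \<le> var_eps ?\<eta> p" unfolding Ip_def profile_def by (rule INF_lower)
    also have "\<dots> \<le> ereal c * var_eps \<xi> q" unfolding c_def using var_eps_le[OF sph assms(1) pq] .
    finally show ?thesis .
  qed
  have "Ip * ereal (1/c) \<le> profile q S TYPE('a)"
    unfolding profile_def
  proof (rule INF_greatest)
    fix \<xi> assume h: "\<xi> \<in> {\<xi> :: 'a \<Rightarrow> 'a \<Rightarrow> real. (\<forall>x. \<xi> x \<in> lp_sphere q) \<and> prop_size \<xi> \<le> ereal S}"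
    have "Ip * ereal (1/c) \<le> (ereal c * var_eps \<xi> q) * ereal (1/c)"
      using key[OF h] c0 by (intro ereal_mult_right_mono) auto
    also have "\<dots> = (ereal c * ereal (1/c)) * var_eps \<xi> q" by (metis mult.assoc mult.commute)
    also have "ereal c * ereal (1/c) = 1" using c0 by (simp add: one_ereal_def)
    finally show "Ip * ereal (1/c) \<le> var_eps \<xi> q" by simp
  qed
  hence "Ip * ereal (1/c) * ereal c \<le> profile q S TYPE('a) * ereal c"
    using c0 by (intro ereal_mult_right_mono) auto
  moreover have "Ip * ereal (1/c) * ereal c = Ip"
  proof -
    have "Ip * ereal (1/c) * ereal c = Ip * (ereal (1/c) * ereal c)" by (rule mult.assoc)
    also have "ereal (1/c) * ereal c = 1" using c0 by (simp add: one_ereal_def)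
    finally show ?thesis by simp
  qed
  ultimately show ?thesis by (simp add: Ip_def c_def mult.commute)
qed

end
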